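(* Let $N\in\mathbb N$ and, for $p>1$ and $x\in\mathbb R$, let \[\mathfrak h_{p,N}(x)=\sum_{n\in\mathbb Z,\ |x-n|>N}|\mathrm{sinc}(x-n)|^p .\] Then there exists $p_*$ such that $x=1/2$ is a local minimum point of $\mathfrak h_{p,N}$ if $p>p_*$ and a local maximum point of $\mathfrak h_{p,N}$ if $p<p_*$. The value $p_*$ is a solution of the equation \[4(p_*+1)\lambda(p_*+2;N)-\pi^2\lambda(p_*;N)=0,\] and it satisfies \[p_*\ge \frac18\Big(\pi^2(2N+1)^2-12+\sqrt{(\pi^2(2N+1)^2-12)^2-128}\Big),\] \[p_*\le \frac14\sqrt{72\pi^2(N+1)^2\big(2\pi^2(N+1)^2-2-\pi^2\big)+4+36\pi^2+9\pi^4}+3\pi^2(N+1)^2-\frac34(2+\pi^2).\]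
   Context: $\mathrm{sinc}(x)=\frac{\sin(\pi x)}{\pi x}$ for $x\neq0$ and $\mathrm{sinc}(0)=1$. The incomplete Lambda function is $\lambda(s;a)=\sum_{n=1}^\infty \frac{1}{(2(n+a)-1)^s}$ for $s>1$, $a\ge 0$. *)

theory Defs
  imports "HOL-Analysis.Analysis"
begin

definition nsinc :: "real \<Rightarrow> real" where
  "nsinc x = (if x = 0 then 1 else sin (pi * x) / (pi * x))"

definition incLambda :: "real \<Rightarrow> real \<Rightarrow> real" where
  "incLambda s a = (\<Sum>n. 1 / (2 * (real (Suc n) + a) - 1) powr s)"

definition hfun :: "real \<Rightarrow> nat \<Rightarrow> real \<Rightarrow> real" where
  "hfun p N x = infsum (\<lambda>n::int. \<bar>nsinc (x - of_int n)\<bar> powr p)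
                   {n::int. \<bar>x - of_int n\<bar> > real N}"

definition local_min_point :: "(real \<Rightarrow> real) \<Rightarrow> real \<Rightarrow> bool" where
  "local_min_point f x0 \<longleftrightarrow> (\<forall>\<^sub>F y in at x0. f x0 \<le> f y)"

definition local_max_point :: "(real \<Rightarrow> real) \<Rightarrow> real \<Rightarrow> bool" where
  "local_max_point f x0 \<longleftrightarrow> (\<forall>\<^sub>F y in at x0. f y \<le> f x0)"

end

theory Submission
  imports Defs "HOL-Analysis.Analysis"
begin

lemma summ_shift:
  fixes c s :: real
  assumes "c \<ge> 1" "s > 1"
  shows "summable (\<lambda>j::nat. (c + real j) powr (-s))"
proof (rule summable_comparison_test[where g="\<lambda>j. real (Suc j) powr (-s)"])
  have "summable (\<lambda>j::nat. real j powr (-s))"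
    using summable_real_powr_iff[of "-s"] assms by simp
  then show "summable (\<lambda>j. real (Suc j) powr (-s))"
    using summable_Suc_iff[of "\<lambda>j. real j powr (-s)"] by simp
  show "\<exists>N. \<forall>n\<ge>N. norm ((c + real n) powr (-s)) \<le> real (Suc n) powr (-s)"
    using assms by (intro exI[of _ 0] allI impI) (auto intro!: powr_mono2')
qed

definition Lam :: "nat \<Rightarrow> real \<Rightarrow> real" where
  "Lam N s = (\<Sum>j. (real N + 1/2 + real j) powr (-s))"

lemma Lam_summable: "N \<ge> 1 \<Longrightarrow> s > 1 \<Longrightarrow> summable (\<lambda>j. (real N + 1/2 + real j) powr (-s))"
  using summ_shift[of "real N + 1/2" s] by simp

lemma Lam_pos: "N \<ge> 1 \<Longrightarrow> s > 1 \<Longrightarrow> Lam N s > 0"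
  unfolding Lam_def
  by (rule suminf_pos[OF Lam_summable]) auto

lemma incLambda_eq:
  assumes "N \<ge> 1" "s > 1"
  shows "incLambda s (real N) = 2 powr (-s) * Lam N s"
proof -
  have "incLambda s (real N) = (\<Sum>j. 2 powr (-s) * (real N + 1/2 + real j) powr (-s))"
    unfolding incLambda_def
  proof (intro suminf_cong)
    fix n
    define x where "x = real N + 1/2 + real n"
    have x: "x > 0" unfolding x_def by simp
    have e: "2 * (real (Suc n) + real N) - 1 = 2 * x" unfolding x_def by simp
    have m: "(2 * x) powr s = 2 powr s * x powr s" using x powr_mult[of 2 x s] by simp
    show "1 / (2 * (real (Suc n) + real N) - 1) powr s = 2 powr (-s) * (real N + 1/2 + real n) powr (-s)"
      unfolding e m x_def[symmetric] by (simp add: powr_minus field_simps)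
  qed
  also have "\<dots> = 2 powr (-s) * Lam N s"
    unfolding Lam_def by (rule suminf_mult[OF Lam_summable[OF assms]])
  finally show ?thesis .
qed

definition G :: "nat \<Rightarrow> real \<Rightarrow> real" where
  "G N p = (p+1) * Lam N (p+2) - pi^2 * Lam N p"

lemma pw2: "(x::real) > 0 \<Longrightarrow> x powr (-(s+2)) = x powr (-s) / x^2"
proof -
  assume x: "x > 0"
  have "x powr (-(s+2)) = x powr (-s - 2)" by simp
  also have "\<dots> = x powr (-s) / x powr 2" by (rule powr_diff)
  also have "x powr 2 = x^2" using powr_realpow[OF x, of 2] by simp
  finally show ?thesis .
qed

lemma Lam_sums: "N \<ge> 1 \<Longrightarrow> s > 1 \<Longrightarrow> (\<lambda>j. (real N + 1/2 + real j) powr (-s)) sums Lam N s"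
  unfolding Lam_def using Lam_summable summable_sums by blast

lemma G_sums:
  assumes "N \<ge> 1" "p > 1"
  shows "(\<lambda>j. (p+1) * (real N + 1/2 + real j) powr (-(p+2)) - pi^2 * (real N + 1/2 + real j) powr (-p)) sums G N p"
  unfolding G_def
  by (intro sums_diff sums_mult Lam_sums) (use assms in auto)

lemma G_sign:
  assumes N: "N \<ge> 1" and p0: "p0 > 1" and G0: "G N p0 = 0" and p: "p > 1"
  shows "(p > p0 \<longrightarrow> G N p > 0) \<and> (p < p0 \<longrightarrow> G N p < 0)"
proof -
  define u where "u j = real N + 1/2 + real j" for j
  have upos: "u j > 0" for j unfolding u_def by simp
  define d where "d = p - p0"
  define w where "w = sqrt (p0+1) / pi"
  have wpos: "w > 0" unfolding w_def using p0 by simp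
  have w2: "pi^2 * w^2 = p0 + 1" unfolding w_def using p0 by (simp add: power_divide)
  define X where "X j = (u j powr (-p) - w powr (-d) * u j powr (-p0)) * ((p0+1) / (u j)^2 - pi^2)" for j
  have Xeq: "X j = ((p+1) * u j powr (-(p+2)) - pi^2 * u j powr (-p))
                 - w powr (-d) * ((p0+1) * u j powr (-(p0+2)) - pi^2 * u j powr (-p0))
                 - d * u j powr (-(p+2))" for j
    unfolding X_def pw2[OF upos] d_def by (simp add: field_simps) (simp add: divide_simps algebra_simps)
  have "(\<lambda>j. ((p+1) * u j powr (-(p+2)) - pi^2 * u j powr (-p))
                 - w powr (-d) * ((p0+1) * u j powr (-(p0+2)) - pi^2 * u j powr (-p0))
                 - d * u j powr (-(p+2))) sums (G N p - w powr (-d) * G N p0 - d * Lam N (p+2))"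
    unfolding u_def
    by (intro sums_diff sums_mult G_sums Lam_sums) (use N p p0 in auto)
  hence "(\<lambda>j. X j) sums (G N p - d * Lam N (p+2))" unfolding Xeq using G0 by simp
  hence Xs: "X sums (G N p - d * Lam N (p+2))" by simp
  have Lp: "Lam N (p+2) > 0" using Lam_pos N p by simp
  have sgn: "X j * d \<ge> 0" for j
  proof -
    have f: "u j powr (-p) = u j powr (-p0) * u j powr (-d)" unfolding d_def
      by (simp add: powr_add[symmetric])
    have X2: "X j = u j powr (-p0) * (u j powr (-d) - w powr (-d)) * ((p0+1) / (u j)^2 - pi^2)"
      unfolding X_def f by (simp add: algebra_simps)
    have c: "(p0+1) / (u j)^2 - pi^2 = pi^2 * (w^2 - (u j)^2) / (u j)^2"
      using upos[of j] w2 by (simp add: field_simps)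
    have A: "(u j powr (-d) - w powr (-d)) * (w^2 - (u j)^2) * d \<ge> 0"
    proof (cases "u j \<le> w")
      case True
      hence sq: "w^2 - (u j)^2 \<ge> 0" using upos[of j] by (simp add: power_mono)
      show ?thesis
      proof (cases "d \<ge> 0")
        case True
        have "u j powr (-d) \<ge> w powr (-d)" using True \<open>u j \<le> w\<close> upos[of j] by (intro powr_mono2') auto
        thus ?thesis using sq True by simp
      next
        case False
        have "u j powr (-d) \<le> w powr (-d)" using False \<open>u j \<le> w\<close> upos[of j] by (intro powr_mono2) auto
        hence "(u j powr (-d) - w powr (-d)) * (w^2 - (u j)^2) \<le> 0" using sq by (simp add: mult_nonpos_nonneg)
        thus ?thesis using False by (simp add: mult_nonpos_nonpos)
      qed
    next
      case False
      hence sq: "w^2 - (u j)^2 \<le> 0" using wpos by (simp add: power_mono)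
      show ?thesis
      proof (cases "d \<ge> 0")
        case True
        have "u j powr (-d) \<le> w powr (-d)" using True False wpos by (intro powr_mono2') auto
        hence "(u j powr (-d) - w powr (-d)) * (w^2 - (u j)^2) \<ge> 0" using sq by (simp add: mult_nonpos_nonpos)
        thus ?thesis using True by simp
      next
        case F2: False
        have "u j powr (-d) \<ge> w powr (-d)" using F2 False wpos by (intro powr_mono2) auto
        hence "(u j powr (-d) - w powr (-d)) * (w^2 - (u j)^2) \<le> 0" using sq by (simp add: mult_nonneg_nonpos)
        thus ?thesis using F2 by (simp add: mult_nonpos_nonpos)
      qed
    qed
    have "X j * d = u j powr (-p0) * pi^2 / (u j)^2 * ((u j powr (-d) - w powr (-d)) * (w^2 - (u j)^2) * d)"
      unfolding X2 c by (simp add: field_simps)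
    also have "\<dots> \<ge> 0" using A upos[of j] by simp
    finally show ?thesis .
  qed
  show ?thesis
  proof (intro conjI impI)
    assume "p > p0"
    hence dpos: "d > 0" unfolding d_def by simp
    have "\<forall>j. X j \<ge> 0" using sgn dpos by (meson zero_le_mult_iff not_le)
    hence "0 \<le> G N p - d * Lam N (p+2)" by (intro sums_le[OF _ sums_zero Xs]) auto
    moreover have "d * Lam N (p+2) > 0" using dpos Lp by (rule mult_pos_pos)
    ultimately show "G N p > 0" by linarith
  next
    assume "p < p0"
    hence dneg: "d < 0" unfolding d_def by simp
    have "\<forall>j. X j \<le> 0" using sgn dneg by (auto simp: zero_le_mult_iff)
    hence "G N p - d * Lam N (p+2) \<le> 0" by (intro sums_le[OF _ Xs sums_zero]) auto
    moreover have "d * Lam N (p+2) < 0" using dneg Lp by (rule mult_neg_pos)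
    ultimately show "G N p < 0" by linarith
  qed
qed

lemma Lam_cont:
  assumes N: "N \<ge> 1" and a: "a > 1"
  shows "continuous_on {a..} (Lam N)"
proof -
  define f where "f i s = (real N + 1/2 + real i) powr (-s)" for i :: nat and s :: real
  have ul: "uniform_limit {a..} (\<lambda>n s. \<Sum>i<n. f i s) (\<lambda>s. suminf (\<lambda>i. f i s)) sequentially"
  proof (rule Weierstrass_m_test[where M="\<lambda>i. f i a"])
    fix n and s :: real assume "s \<in> {a..}"
    thus "norm (f n s) \<le> f n a" unfolding f_def using N by (auto intro!: powr_mono)
  next
    show "summable (\<lambda>i. f i a)" unfolding f_def using Lam_summable N a by simp
  qed
  have "continuous_on {a..} (\<lambda>s. suminf (\<lambda>i. f i s))"
  proof (rule uniform_limit_theorem[OF _ ul])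
    show "\<forall>\<^sub>F n in sequentially. continuous_on {a..} (\<lambda>s. \<Sum>i<n. f i s)"
      unfolding f_def by (intro always_eventually allI continuous_intros) auto
  qed simp
  moreover have "(\<lambda>s. suminf (\<lambda>i. f i s)) = Lam N" unfolding f_def Lam_def by auto
  ultimately show ?thesis by metis
qed

lemma G_cont:
  assumes N: "N \<ge> 1" and a: "a > 1"
  shows "continuous_on {a..} (G N)"
proof -
  have c1: "continuous_on {a..} (Lam N)" by (rule Lam_cont[OF N a])
  have c2: "continuous_on {a..} (\<lambda>p. Lam N (p+2))"
    by (rule continuous_on_compose2[OF c1]) (auto intro!: continuous_intros)
  have "continuous_on {a..} (\<lambda>p. (p+1) * Lam N (p+2) - pi^2 * Lam N p)"
    by (intro continuous_intros c1 c2)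
  thus ?thesis unfolding G_def[abs_def] .
qed

lemma G_neg:
  assumes N: "N \<ge> 1" and p: "p > 1" and q: "p + 1 < pi^2 * (real N + 1/2)^2"
  shows "G N p < 0"
proof -
  define u0 where "u0 = real N + 1/2"
  have u0: "u0 > 0" unfolding u0_def by simp
  have "Lam N (p+2) \<le> (\<Sum>j. (real N + 1/2 + real j) powr (-p) / u0^2)"
    unfolding Lam_def
  proof (rule suminf_le)
    fix j
    have x: "real N + 1/2 + real j > 0" by simp
    have "(real N + 1/2 + real j) powr (-(p+2)) = (real N + 1/2 + real j) powr (-p) / (real N + 1/2 + real j)^2"
      by (rule pw2[OF x])
    also have "\<dots> \<le> (real N + 1/2 + real j) powr (-p) / u0^2"
      unfolding u0_def by (intro divide_left_mono power_mono mult_pos_pos) auto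
    finally show "(real N + 1/2 + real j) powr (-(p+2)) \<le> (real N + 1/2 + real j) powr (-p) / u0^2" .
  next
    show "summable (\<lambda>j. (real N + 1/2 + real j) powr (-(p+2)))" using Lam_summable[OF N, of "p+2"] p by simp
    show "summable (\<lambda>j. (real N + 1/2 + real j) powr (-p) / u0^2)"
      using Lam_summable[OF N p] by (rule summable_divide)
  qed
  also have "\<dots> = Lam N p / u0^2" unfolding Lam_def
    by (rule suminf_divide[OF Lam_summable[OF N p]])
  finally have L: "Lam N (p+2) \<le> Lam N p / u0^2" .
  have Lp: "Lam N p > 0" using Lam_pos N p by simp
  have "G N p \<le> (p+1) * (Lam N p / u0^2) - pi^2 * Lam N p"
    unfolding G_def using L p by (intro diff_right_mono mult_left_mono) auto
  also have "\<dots> = Lam N p * ((p+1) - pi^2 * u0^2) / u0^2" using u0 by (simp add: field_simps)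
  also have "\<dots> < 0" using Lp q u0 unfolding u0_def
    by (intro divide_neg_pos mult_pos_neg) auto
  finally show ?thesis .
qed

lemma rho_bound:
  fixes u0 e :: real
  assumes u0: "u0 \<ge> 1" and e: "e \<ge> u0^2 - 1" and e0: "e \<ge> 0"
  shows "u0 * (u0+1) powr (-e) \<le> u0 powr (-e)"
proof -
  define r where "r = u0 / (u0+1)"
  have r0: "r > 0" unfolding r_def using u0 by simp
  have lr: "ln r \<le> - 1/(u0+1)"
    using ln_le_minus_one[OF r0] u0 unfolding r_def by (simp add: field_simps)
  have "r powr e = exp (e * ln r)" using r0 by (simp add: powr_def mult.commute)
  also have "\<dots> \<le> exp (- (e/(u0+1)))"
    using mult_left_mono[OF lr e0] by simp
  also have "\<dots> = 1 / exp (e/(u0+1))" by (simp add: exp_minus field_simps)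
  also have "\<dots> \<le> 1 / (1 + e/(u0+1))"
    using e0 u0 by (intro divide_left_mono exp_ge_add_one_self) (auto intro!: mult_pos_pos add_pos_nonneg)
  also have "\<dots> \<le> 1 / u0"
  proof (rule divide_left_mono)
    have "(u0 - 1) * (u0+1) \<le> e" using e by (simp add: algebra_simps power2_eq_square)
    hence "u0 - 1 \<le> e / (u0+1)" using u0 by (simp add: field_simps)
    thus "u0 \<le> 1 + e/(u0+1)" by simp
  qed (use u0 e0 in \<open>auto intro!: mult_pos_pos add_pos_nonneg\<close>)
  finally have A: "r powr e \<le> 1/u0" .
  have "r powr e = u0 powr e / (u0+1) powr e" unfolding r_def using u0 by (simp add: powr_divide)
  hence "u0 powr e / (u0+1) powr e \<le> 1/u0" using A by simp
  hence "u0 * u0 powr e \<le> (u0+1) powr e" using u0 by (simp add: field_simps)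
  hence "u0 * u0 powr e / ((u0+1) powr e * u0 powr e) \<le> (u0+1) powr e / ((u0+1) powr e * u0 powr e)"
    using u0 by (intro divide_right_mono) auto
  thus ?thesis using u0 by (simp add: powr_minus field_simps)
qed

lemma G_nonneg:
  assumes N: "N \<ge> 1"
  defines "p' \<equiv> 2 * pi^2 * (real N + 1/2)^2 - 1"
  shows "G N p' \<ge> 0"
proof -
  define u0 where "u0 = real N + 1/2"
  define u where "u j = u0 + real j" for j
  define e where "e = p' - 2"
  have u0: "u0 \<ge> 3/2" unfolding u0_def using N by simp
  have pi3: "pi^2 \<ge> 9" using power_mono[of 3 pi 2] pi_gt3 by simp
  have u02: "u0^2 \<ge> 9/4" using power_mono[OF u0, of 2] by (simp add: power2_eq_square)
  have pe: "p' = 2 * pi^2 * u0^2 - 1" unfolding p'_def u0_def ..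
  have p'3: "p' \<ge> 3" unfolding pe using mult_mono[OF pi3 u02] by simp
  have p'1: "p' > 1" using p'3 by simp
  have e0: "e \<ge> 0" unfolding e_def using p'3 by simp
  have "pi^2*u0^2 \<ge> 9*u0^2" by (rule mult_right_mono[OF pi3]) simp
  hence ee: "e \<ge> u0^2 - 1" unfolding e_def pe using u02 by simp
  have upos: "u j > 0" for j unfolding u_def using u0 by simp
  define T where "T j = (p'+1) * u j powr (-(p'+2)) - pi^2 * u j powr (-p')" for j
  have Ts: "T sums G N p'" unfolding T_def u_def u0_def using G_sums[OF N p'1] .
  have sT: "summable T" using Ts sums_summable by blast
  have T0: "T 0 = pi^2 * u0 powr (-p')"
  proof -
    have "u 0 = u0" unfolding u_def u0_def by simp
    moreover have "u0 > 0" using u0 by simp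
    ultimately show ?thesis unfolding T_def pw2[OF upos] pe by (simp add: field_simps power2_eq_square)
  qed
  have TS: "T (Suc j) \<ge> (-(pi^2)) * u (Suc j) powr (-p')" for j
    unfolding T_def using p'1 by simp
  have B: "u (Suc j) powr (-p') \<le> (u0+1) powr (-e) * (1 / u j - 1 / u (Suc j))" for j
  proof -
    have us: "u (Suc j) = u j + 1" unfolding u_def by simp
    have "u (Suc j) powr (-p') = u (Suc j) powr (-e) / (u (Suc j))^2"
      using pw2[OF upos[of "Suc j"], of e] unfolding e_def by simp
    also have "\<dots> \<le> (u0+1) powr (-e) / (u (Suc j))^2"
      using e0 upos[of "Suc j"] u0 by (intro divide_right_mono powr_mono2') (auto simp: u_def)
    also have "\<dots> \<le> (u0+1) powr (-e) * (1 / u j - 1 / u (Suc j))"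
    proof -
      have "1 / (u j + 1)^2 \<le> 1 / (u j * (u j + 1))"
        using upos[of j] by (intro divide_left_mono) (auto simp: power2_eq_square intro!: mult_right_mono mult_pos_pos)
      also have "\<dots> = 1 / u j - 1 / (u j + 1)" using upos[of j] by (simp add: field_simps)
      finally have "1 / (u (Suc j))^2 \<le> 1 / u j - 1 / u (Suc j)" unfolding us .
      thus ?thesis by (metis mult_left_mono powr_ge_zero times_divide_eq_right mult.right_neutral)
    qed
    finally show ?thesis .
  qed
  have lim: "(\<lambda>j. 1 / u j) \<longlonglongrightarrow> 0"
  proof -
    have "filterlim (\<lambda>j. u0 + real j) at_top sequentially"
      by (rule filterlim_tendsto_add_at_top[OF tendsto_const filterlim_real_sequentially])
    hence "(\<lambda>j. inverse (u0 + real j)) \<longlonglongrightarrow> 0" by (rule tendsto_inverse_0_at_top)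
    thus ?thesis unfolding u_def inverse_eq_divide .
  qed
  have tel: "(\<lambda>j. (u0+1) powr (-e) * (1 / u j - 1 / u (Suc j))) sums ((u0+1) powr (-e) * (1 / u 0 - 0))"
    by (intro sums_mult telescope_sums'[OF lim])
  have su: "summable (\<lambda>j. u (Suc j) powr (-p'))"
    using Lam_summable[OF N p'1] unfolding u_def u0_def by (subst summable_Suc_iff) 
  have S1: "(\<Sum>j. u (Suc j) powr (-p')) \<le> (u0+1) powr (-e) / u0"
    using sums_le[OF B summable_sums[OF su] tel] unfolding u_def by simp
  have S2: "(u0+1) powr (-e) / u0 \<le> u0 powr (-p')"
  proof -
    have "u0 * (u0+1) powr (-e) \<le> u0 powr (-e)" using rho_bound[of u0 e] u0 ee e0 by simp
    hence "(u0+1) powr (-e) / u0 \<le> u0 powr (-e) / u0^2" using u0 by (simp add: field_simps power2_eq_square)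
    also have "\<dots> = u0 powr (-p')" using pw2[of u0 e] u0 unfolding e_def by simp
    finally show ?thesis .
  qed
  have Gs: "G N p' = T 0 + (\<Sum>j. T (Suc j))" using suminf_split_head[OF sT] sums_unique[OF Ts] by simp
  have le1: "(\<Sum>j. T (Suc j)) \<ge> (\<Sum>j. (-(pi^2)) * u (Suc j) powr (-p'))"
    using TS su sT by (intro suminf_le summable_minus summable_mult) (auto simp: summable_Suc_iff)
  have eq1: "(\<Sum>j. (-(pi^2)) * u (Suc j) powr (-p')) = (-(pi^2)) * (\<Sum>j. u (Suc j) powr (-p'))"
    by (rule suminf_mult[OF su])
  have "G N p' \<ge> pi^2 * (u0 powr (-p') - (\<Sum>j. u (Suc j) powr (-p')))"
    using Gs le1 eq1 T0 by (simp add: algebra_simps)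
  moreover have "u0 powr (-p') - (\<Sum>j. u (Suc j) powr (-p')) \<ge> 0" using S1 S2 by simp
  hence "pi^2 * (u0 powr (-p') - (\<Sum>j. u (Suc j) powr (-p'))) \<ge> 0" by simp
  ultimately show ?thesis by linarith
qed

lemma dA: "u - t > 0 \<Longrightarrow> ((\<lambda>t. (u-t) powr a) has_real_derivative (- a * (u-t) powr (a-1))) (at t)"
proof -
  assume h: "u - t > 0"
  have "((\<lambda>t. (u-t) powr a) has_real_derivative (a * (u-t) powr (a-1) * (-1))) (at t)"
    by (rule DERIV_chain2[where f="\<lambda>z. z powr a" and g="\<lambda>s. u - s", OF has_real_derivative_powr[OF h]]) (auto intro!: derivative_eq_intros)
  thus ?thesis by simp
qed

lemma dB: "u + t > 0 \<Longrightarrow> ((\<lambda>t. (u+t) powr a) has_real_derivative (a * (u+t) powr (a-1))) (at t)"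
proof -
  assume h: "u + t > 0"
  have "((\<lambda>t. (u+t) powr a) has_real_derivative (a * (u+t) powr (a-1) * 1)) (at t)"
    by (rule DERIV_chain2[where f="\<lambda>z. z powr a" and g="\<lambda>s. u + s", OF has_real_derivative_powr[OF h]]) (auto intro!: derivative_eq_intros)
  thus ?thesis by simp
qed

lemma pair_taylor:
  fixes u t p :: real
  assumes u: "u \<ge> 3/2" and t: "\<bar>t\<bar> \<le> 1/2" and p: "p > 1"
  shows "\<exists>\<xi>. \<bar>\<xi>\<bar> \<le> \<bar>t\<bar> \<and> (u-t) powr (-p) + (u+t) powr (-p) =
     2 * u powr (-p) + p*(p+1) * u powr (-p-2) * t^2
     + p*(p+1)*(p+2)*(p+3) * ((u-\<xi>) powr (-p-4) + (u+\<xi>) powr (-p-4)) / 24 * t^4"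
proof -
  define diff where "diff m \<tau> = pochhammer p m * ((u-\<tau>) powr (-p - real m) + (-1)^m * (u+\<tau>) powr (-p - real m))" for m :: nat and \<tau> :: real
  have d0: "diff 0 = (\<lambda>\<tau>. (u-\<tau>) powr (-p) + (u+\<tau>) powr (-p))"
    unfolding diff_def by (simp add: fun_eq_iff)
  have D: "\<forall>(m::nat) \<tau>. m < 4 \<and> \<bar>\<tau>\<bar> \<le> \<bar>t\<bar> \<longrightarrow> DERIV (diff m) \<tau> :> diff (Suc m) \<tau>"
  proof (intro allI impI)
    fix m :: nat and \<tau> :: real assume h: "m < 4 \<and> \<bar>\<tau>\<bar> \<le> \<bar>t\<bar>"
    have pa: "u - \<tau> > 0" "u + \<tau> > 0" using h t u by auto
    have "DERIV (diff m) \<tau> :> pochhammer p m * (- (-p - real m) * (u-\<tau>) powr ((-p - real m) - 1)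
           + (-1)^m * ((-p - real m) * (u+\<tau>) powr ((-p - real m) - 1)))"
      unfolding diff_def
      by (intro DERIV_cmult DERIV_add dA[OF pa(1)] dB[OF pa(2)])
    moreover have "pochhammer p m * (- (-p - real m) * (u-\<tau>) powr ((-p - real m) - 1)
           + (-1)^m * ((-p - real m) * (u+\<tau>) powr ((-p - real m) - 1))) = diff (Suc m) \<tau>"
    proof -
      have e: "(-p - real m) - 1 = -p - real (Suc m)" by simp
      show ?thesis unfolding diff_def e by (simp add: pochhammer_rec' algebra_simps)
    qed
    ultimately show "DERIV (diff m) \<tau> :> diff (Suc m) \<tau>" by simp
  qed
  obtain \<xi> where xi: "\<bar>\<xi>\<bar> \<le> \<bar>t\<bar>"
    and eq: "diff 0 t = (\<Sum>m<4. diff m 0 / fact m * t ^ m) + diff 4 \<xi> / fact 4 * t ^ 4"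
    using Maclaurin_bi_le[OF refl D] by blast
  have S: "(\<Sum>m<4. diff m 0 / fact m * t ^ m) = 2 * u powr (-p) + p*(p+1) * u powr (-p-2) * t^2"
    unfolding diff_def by (simp add: eval_nat_numeral pochhammer_rec' field_simps)
  have R: "diff 4 \<xi> / fact 4 * t ^ 4 = p*(p+1)*(p+2)*(p+3) * ((u-\<xi>) powr (-p-4) + (u+\<xi>) powr (-p-4)) / 24 * t^4"
    unfolding diff_def by (simp add: eval_nat_numeral pochhammer_rec' field_simps)
  have "(u-t) powr (-p) + (u+t) powr (-p) = diff 0 t" using d0 by simp
  also have "\<dots> = (\<Sum>m<4. diff m 0 / fact m * t ^ m) + diff 4 \<xi> / fact 4 * t ^ 4" by (rule eq)
  also have "\<dots> = 2 * u powr (-p) + p*(p+1) * u powr (-p-2) * t^2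
     + p*(p+1)*(p+2)*(p+3) * ((u-\<xi>) powr (-p-4) + (u+\<xi>) powr (-p-4)) / 24 * t^4" unfolding S R ..
  finally show ?thesis using xi by blast
qed

lemma pair_bounds:
  fixes u t p :: real
  assumes u: "u \<ge> 3/2" and t: "\<bar>t\<bar> \<le> 1/2" and p: "p > 1"
  shows "2 * u powr (-p) + p*(p+1) * u powr (-p-2) * t^2 \<le> (u-t) powr (-p) + (u+t) powr (-p)"
    and "(u-t) powr (-p) + (u+t) powr (-p) \<le> 2 * u powr (-p) + p*(p+1) * u powr (-p-2) * t^2
            + p*(p+1)*(p+2)*(p+3) / 12 * (u - 1/2) powr (-p) * t^4"
proof -
  obtain \<xi> where xi: "\<bar>\<xi>\<bar> \<le> \<bar>t\<bar>" and eq: "(u-t) powr (-p) + (u+t) powr (-p) =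
     2 * u powr (-p) + p*(p+1) * u powr (-p-2) * t^2
     + p*(p+1)*(p+2)*(p+3) * ((u-\<xi>) powr (-p-4) + (u+\<xi>) powr (-p-4)) / 24 * t^4"
    using pair_taylor[OF u t p] by blast
  define P4 where "P4 = p*(p+1)*(p+2)*(p+3)"
  have P4: "P4 \<ge> 0" unfolding P4_def using p by simp
  have t4: "t^4 \<ge> 0" by simp
  have R0: "P4 * ((u-\<xi>) powr (-p-4) + (u+\<xi>) powr (-p-4)) / 24 * t^4 \<ge> 0"
    using P4 by simp
  have b: "w powr (-p-4) \<le> (u - 1/2) powr (-p)" if "w \<ge> u - 1/2" for w
  proof -
    have "w powr (-p-4) \<le> (u - 1/2) powr (-p-4)" using that u p by (intro powr_mono2') auto
    also have "\<dots> \<le> (u - 1/2) powr (-p)" using u by (intro powr_mono) auto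
    finally show ?thesis .
  qed
  have ab: "(u-\<xi>) powr (-p-4) + (u+\<xi>) powr (-p-4) \<le> 2 * (u - 1/2) powr (-p)"
  proof -
    have "\<bar>\<xi>\<bar> \<le> 1/2" using xi t by linarith
    hence "u - \<xi> \<ge> u - 1/2" "u + \<xi> \<ge> u - 1/2" by auto
    thus ?thesis using b[of "u-\<xi>"] b[of "u+\<xi>"] by linarith
  qed
  have R1: "P4 * ((u-\<xi>) powr (-p-4) + (u+\<xi>) powr (-p-4)) / 24 * t^4 \<le> P4 / 12 * (u - 1/2) powr (-p) * t^4"
  proof -
    have "P4 * ((u-\<xi>) powr (-p-4) + (u+\<xi>) powr (-p-4)) \<le> P4 * (2 * (u - 1/2) powr (-p))"
      using ab P4 by (rule mult_left_mono)
    hence "P4 * ((u-\<xi>) powr (-p-4) + (u+\<xi>) powr (-p-4)) / 24 * t^4 \<le> P4 * (2 * (u - 1/2) powr (-p)) / 24 * t^4"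
      using t4 by (intro mult_right_mono divide_right_mono) auto
    thus ?thesis by simp
  qed
  show "2 * u powr (-p) + p*(p+1) * u powr (-p-2) * t^2 \<le> (u-t) powr (-p) + (u+t) powr (-p)"
    using eq R0 unfolding P4_def by linarith
  show "(u-t) powr (-p) + (u+t) powr (-p) \<le> 2 * u powr (-p) + p*(p+1) * u powr (-p-2) * t^2
            + p*(p+1)*(p+2)*(p+3) / 12 * (u - 1/2) powr (-p) * t^4"
    using eq R1 unfolding P4_def by linarith
qed

lemma abs_sin_shift:
  fixes t :: real and m :: int
  shows "\<bar>sin (pi * (1/2 + t - of_int m))\<bar> = \<bar>cos (pi * t)\<bar>"
proof -
  have s0: "sin (pi * of_int m) = 0" using sin_zero_iff_int2[of "pi * of_int m"] by (auto simp: mult.commute)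
  have c1: "\<bar>cos (pi * of_int m)\<bar> = 1" by (simp add: cos_npi_int)
  have "pi * (1/2 + t - of_int m) = (pi/2 + pi * t) - pi * of_int m" by (simp add: algebra_simps)
  hence "sin (pi * (1/2 + t - of_int m)) = sin (pi/2 + pi*t) * cos (pi * of_int m) - cos (pi/2 + pi*t) * sin (pi * of_int m)"
    by (simp add: sin_diff)
  also have "\<dots> = cos (pi*t) * cos (pi * of_int m)" using s0 by (simp add: sin_add)
  finally show ?thesis using c1 by (simp add: abs_mult)
qed

lemma nsinc_term:
  fixes t :: real and m :: int and w :: real
  assumes t: "\<bar>t\<bar> < 1/2" and w: "\<bar>1/2 + t - of_int m\<bar> = w" and w0: "w > 0" and p: "p > 0"
  shows "\<bar>nsinc (1/2 + t - of_int m)\<bar> powr p = cos (pi*t) powr p * pi powr (-p) * w powr (-p)"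
proof -
  have t1: "-1/2 < t" "t < 1/2" using t by (auto simp: abs_less_iff)
  have "pi * (-1/2) < pi * t" by (rule mult_strict_left_mono[OF t1(1)]) simp
  moreover have "pi * t < pi * (1/2)" by (rule mult_strict_left_mono[OF t1(2)]) simp
  ultimately have "-(pi/2) < pi * t" "pi * t < pi/2" by simp_all
  hence cpos: "cos (pi*t) > 0" by (intro cos_gt_zero_pi) auto
  have ne: "1/2 + t - of_int m \<noteq> 0" using w w0 by auto
  have "\<bar>nsinc (1/2 + t - of_int m)\<bar> = \<bar>sin (pi * (1/2 + t - of_int m))\<bar> / (pi * w)"
    unfolding nsinc_def using ne w by (simp add: abs_divide abs_mult)
  also have "\<dots> = cos (pi*t) / (pi * w)" using abs_sin_shift[of t m] cpos by simp
  finally have e: "\<bar>nsinc (1/2 + t - of_int m)\<bar> = cos (pi*t) / (pi * w)" .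
  have "(cos (pi*t) / (pi * w)) powr p = cos (pi*t) powr p / (pi powr p * w powr p)"
    using cpos w0 by (simp add: powr_divide powr_mult)
  also have "\<dots> = cos (pi*t) powr p * pi powr (-p) * w powr (-p)" by (simp add: powr_minus field_simps)
  finally show ?thesis unfolding e .
qed

lemma hfun_repr:
  assumes N: "N \<ge> 1" and p: "p > 1" and t: "\<bar>t\<bar> < 1/2"
  shows "hfun p N (1/2 + t) = cos (pi*t) powr p * pi powr (-p) *
    ((\<Sum>j. (real N + 1/2 + real j - t) powr (-p)) + (\<Sum>j. (real N + 1/2 + real j + t) powr (-p)))"
proof -
  define x where "x = 1/2 + t"
  define g where "g n = \<bar>nsinc (x - of_int n)\<bar> powr p" for n :: int
  define K where "K = cos (pi*t) powr p * pi powr (-p)"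
  define fA where "fA j = int (N + 1 + j)" for j
  define fB where "fB j = - int (N + j)" for j
  define a where "a j = (real N + 1/2 + real j - t) powr (-p)" for j
  define b where "b j = (real N + 1/2 + real j + t) powr (-p)" for j
  have K0: "K \<ge> 0" unfolding K_def by simp
  have iff: "\<bar>x - of_int n\<bar> > real N \<longleftrightarrow> (n \<ge> int N + 1 \<or> n \<le> - int N)" for n
  proof
    assume h: "\<bar>x - of_int n\<bar> > real N"
    show "n \<ge> int N + 1 \<or> n \<le> - int N"
    proof (rule ccontr)
      assume "\<not> (n \<ge> int N + 1 \<or> n \<le> - int N)"
      hence "n \<le> int N" "n \<ge> 1 - int N" by auto
      hence "real_of_int n \<le> real N" "real_of_int n \<ge> 1 - real N" by linarith+
      moreover have "-1/2 < t" "t < 1/2" using t by (simp_all add: abs_less_iff)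
      ultimately have "x - of_int n < real N" "-(x - of_int n) < real N" unfolding x_def by linarith+
      hence "\<bar>x - of_int n\<bar> < real N" by (simp only: abs_less_iff)
      thus False using h by simp
    qed
  next
    assume "n \<ge> int N + 1 \<or> n \<le> - int N"
    hence "real_of_int n \<ge> real_of_int (int N + 1) \<or> real_of_int n \<le> real_of_int (- int N)"
      by (simp only: of_int_le_iff)
    hence r: "real_of_int n \<ge> real N + 1 \<or> real_of_int n \<le> - real N" by simp
    have "-1/2 < t" "t < 1/2" using t by (simp_all add: abs_less_iff)
    hence "x - of_int n > real N \<or> -(x - of_int n) > real N" using r unfolding x_def by linarith
    thus "\<bar>x - of_int n\<bar> > real N" by linarith
  qed
  have S: "{n::int. \<bar>x - of_int n\<bar> > real N} = fA ` UNIV \<union> fB ` UNIV"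
  proof (intro equalityI subsetI)
    fix n assume "n \<in> {n::int. \<bar>x - of_int n\<bar> > real N}"
    hence "n \<ge> int N + 1 \<or> n \<le> - int N" using iff by simp
    thus "n \<in> fA ` UNIV \<union> fB ` UNIV"
    proof
      assume "n \<ge> int N + 1"
      hence "n = fA (nat n - N - 1)" unfolding fA_def by simp
      thus ?thesis by blast
    next
      assume "n \<le> - int N"
      hence "n = fB (nat (-n) - N)" unfolding fB_def by simp
      thus ?thesis by blast
    qed
  next
    fix n assume "n \<in> fA ` UNIV \<union> fB ` UNIV"
    hence "n \<ge> int N + 1 \<or> n \<le> - int N" unfolding fA_def fB_def by auto
    thus "n \<in> {n::int. \<bar>x - of_int n\<bar> > real N}" using iff by simp
  qed
  have disj: "fA ` UNIV \<inter> fB ` UNIV = {}" unfolding fA_def fB_def using N by auto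
  have injA: "inj_on fA UNIV" unfolding fA_def inj_on_def by simp
  have injB: "inj_on fB UNIV" unfolding fB_def inj_on_def by simp
  have gA: "(g \<circ> fA) j = K * a j" for j
  proof -
    have "\<bar>x - of_int (fA j)\<bar> = real N + 1/2 + real j - t" unfolding x_def fA_def using t by auto
    thus ?thesis unfolding g_def K_def a_def comp_def x_def using nsinc_term[OF t _ _, of "fA j" "real N + 1/2 + real j - t" p] t p by simp
  qed
  have gB: "(g \<circ> fB) j = K * b j" for j
  proof -
    have "\<bar>x - of_int (fB j)\<bar> = real N + 1/2 + real j + t" unfolding x_def fB_def using t by auto
    thus ?thesis unfolding g_def K_def b_def comp_def x_def using nsinc_term[OF t _ _, of "fB j" "real N + 1/2 + real j + t" p] t p by simp
  qed
  have sa: "summable a"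
  proof (rule summable_comparison_test[OF _ summ_shift[of "real N" p]])
    show "\<exists>M. \<forall>n\<ge>M. norm (a n) \<le> (real N + real n) powr (-p)"
      unfolding a_def using t p N by (intro exI[of _ 0] allI impI) (auto intro!: powr_mono2')
  qed (use N p in auto)
  have sb: "summable b"
  proof (rule summable_comparison_test[OF _ summ_shift[of "real N" p]])
    show "\<exists>M. \<forall>n\<ge>M. norm (b n) \<le> (real N + real n) powr (-p)"
      unfolding b_def using t p N by (intro exI[of _ 0] allI impI) (auto intro!: powr_mono2')
  qed (use N p in auto)
  have hA: "(g has_sum K * suminf a) (fA ` UNIV)"
    unfolding has_sum_reindex[OF injA] comp_def gA[unfolded comp_def]
    by (rule sums_nonneg_imp_has_sum[OF sums_mult[OF summable_sums[OF sa]]]) (use K0 in \<open>auto simp: a_def\<close>)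
  have hB: "(g has_sum K * suminf b) (fB ` UNIV)"
    unfolding has_sum_reindex[OF injB] comp_def gB[unfolded comp_def]
    by (rule sums_nonneg_imp_has_sum[OF sums_mult[OF summable_sums[OF sb]]]) (use K0 in \<open>auto simp: b_def\<close>)
  have "hfun p N x = infsum g (fA ` UNIV \<union> fB ` UNIV)"
    unfolding hfun_def g_def S[symmetric] ..
  also have "\<dots> = K * suminf a + K * suminf b"
    by (rule infsumI[OF has_sum_Un_disjoint[OF hA hB disj]])
  finally show ?thesis unfolding x_def K_def a_def b_def by (simp add: algebra_simps)
qed

lemma cos_taylor4: "\<bar>cos (x::real) - (1 - x^2/2)\<bar> \<le> x^4/24"
proof -
  from Maclaurin_cos_expansion[of x 4] obtain t where T:
    "\<bar>t\<bar> \<le> \<bar>x\<bar> \<and> cos x = (\<Sum>m<4. cos_coeff m * x ^ m) + (cos(t + 1/2 * real 4 * pi) / fact 4) * x ^ 4" ..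
  have e: "cos x = 1 - x^2/2 + cos(t + 1/2 * real 4 * pi) / 24 * x^4"
  proof -
    have c: "cos_coeff 0 = 1" "cos_coeff 1 = 0" "cos_coeff 2 = -1/2" "cos_coeff 3 = 0"
      by (simp_all add: cos_coeff_def)
    have s4: "{..<4::nat} = {0,1,2,3}" by auto
    have "(\<Sum>m<4. cos_coeff m * x ^ m) = 1 - x^2/2" unfolding s4 using c by simp
    moreover have "fact 4 = (24::real)" by (simp add: fact_numeral)
    ultimately show ?thesis using T by simp
  qed
  have "\<bar>cos(t + 1/2 * real 4 * pi)\<bar> * x^4 \<le> 1 * x^4"
    by (rule mult_right_mono) auto
  hence "\<bar>cos(t + 1/2 * real 4 * pi) / 24 * x^4\<bar> \<le> 1/24 * x^4"
    by (simp add: abs_mult)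
  thus ?thesis unfolding e by simp
qed

lemma inv_bound: "(y::real) \<ge> 0 \<Longrightarrow> 1 / (1 + y) \<le> 1 - y + y^2"
proof -
  assume y: "y \<ge> 0"
  have "(1 - y + y^2) * (1 + y) = 1 + y^3" by (simp add: algebra_simps power2_eq_square power3_eq_cube)
  hence "1 \<le> (1 - y + y^2) * (1 + y)" using y by simp
  thus ?thesis using y by (simp add: field_simps)
qed

lemma cosp_bounds:
  fixes p t :: real
  assumes p: "p > 1" and t: "\<bar>t\<bar> \<le> 1/5"
  shows "\<bar>cos (pi*t) powr p - (1 - p*pi^2/2 * t^2)\<bar> \<le> (p/6 + 8*p + p^2) * pi^4/4 * t^4"
proof -
  define a where "a = pi^2 * t^2 / 2"
  have a0: "a \<ge> 0" unfolding a_def by simp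
  have pi2: "pi^2 \<le> 16" using power_mono[of pi 4 2] pi_less_4 by simp
  have "\<bar>t\<bar>^2 \<le> (1/5)^2" by (rule power_mono) (use t in auto)
  hence t2: "t^2 \<le> 1/25" by (simp add: power_divide)
  have a13: "a \<le> 1/3"
  proof -
    have "pi^2 * t^2 \<le> 16 * (1/25)" using pi2 t2 by (intro mult_mono) auto
    thus ?thesis unfolding a_def by simp
  qed
  have asq: "a^2 = pi^4 * t^4 / 4" unfolding a_def by (simp add: power_mult_distrib power2_eq_square power4_eq_xxxx)
  have ct: "\<bar>cos (pi*t) - (1 - a)\<bar> \<le> a^2/6"
  proof -
    have e1: "(pi*t)^2/2 = a" unfolding a_def by (simp add: power_mult_distrib)
    have e2: "(pi*t)^4/24 = a^2/6" unfolding asq by (simp add: power_mult_distrib)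
    show ?thesis using cos_taylor4[of "pi*t"] unfolding e1 e2 .
  qed
  define a1 where "a1 = a + a^2/6"
  define a0' where "a0' = a - a^2/6"
  have asm: "a^2 \<le> a/3" using mult_left_mono[OF a13 a0] by (simp add: power2_eq_square)
  have a1le: "a1 \<le> 2*a" unfolding a1_def using asm a0 by linarith
  have a1h: "a1 \<le> 1/2" unfolding a1_def using asm a0 a13 by linarith
  have a1n: "a1 \<ge> 0" unfolding a1_def using a0 by simp
  have a0'n: "a0' \<ge> 0" unfolding a0'_def using asm a0 by linarith
  have a0'le: "a0' \<le> a" unfolding a0'_def by simp
  have a1sq: "a1^2 \<le> 4 * a^2" using power_mono[OF a1le a1n, of 2] by (simp add: power_mult_distrib)
  have a0sq: "a0'^2 \<le> a^2" using power_mono[OF a0'le a0'n, of 2] .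
  have clo: "cos (pi*t) \<ge> 1 - a1" using ct unfolding a1_def abs_le_iff by linarith
  have chi: "cos (pi*t) \<le> 1 - a0'" using ct unfolding a0'_def abs_le_iff by linarith
  have pos1: "1 - a1 > 0" using a1h by simp
  have "1 + p * (- a1 - 2 * a1^2) \<le> exp (p * (- a1 - 2 * a1^2))" by (rule exp_ge_add_one_self)
  also have "\<dots> \<le> exp (p * ln (1 - a1))"
    using mult_left_mono[OF ln_one_minus_pos_lower_bound[OF a1n a1h], of p] p by simp
  also have "\<dots> = (1 - a1) powr p" using pos1 by (simp add: powr_def mult.commute)
  also have "\<dots> \<le> cos (pi*t) powr p" using clo pos1 p by (intro powr_mono2) auto
  finally have lo: "cos (pi*t) powr p \<ge> 1 - p*a1 - 2*p*a1^2" by (simp add: algebra_simps)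
  have lo2: "cos (pi*t) powr p \<ge> 1 - p*a - (p/6 + 8*p) * a^2"
  proof -
    have "2*p*a1^2 \<le> 2*p*(4*a^2)" using a1sq p by (intro mult_left_mono) auto
    thus ?thesis using lo unfolding a1_def by (simp add: algebra_simps)
  qed
  have ex: "1 - a0' \<le> exp (-a0')" using exp_ge_add_one_self[of "-a0'"] by simp
  have cpos: "cos (pi*t) \<ge> 0" using clo pos1 by linarith
  have "cos (pi*t) powr p \<le> (1 - a0') powr p" by (rule powr_mono2[OF _ cpos chi]) (use p in simp)
  also have "\<dots> \<le> exp (- a0') powr p" by (rule powr_mono2[OF _ _ ex]) (use p a0'le a13 in linarith)+
  also have "exp (- a0') powr p = exp (- (p * a0'))" by (simp add: powr_def)
  also have "\<dots> = 1 / exp (p * a0')" by (simp add: exp_minus field_simps)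
  also have "\<dots> \<le> 1 / (1 + p * a0')" using p a0'n by (intro divide_left_mono exp_ge_add_one_self) (auto intro!: mult_pos_pos add_pos_nonneg)
  also have "\<dots> \<le> 1 - p * a0' + (p * a0')^2" using p a0'n by (intro inv_bound) simp
  finally have hi: "cos (pi*t) powr p \<le> 1 - p * a0' + (p * a0')^2" .
  have hi2: "cos (pi*t) powr p \<le> 1 - p*a + (p/6 + p^2) * a^2"
  proof -
    have "(p * a0')^2 \<le> p^2 * a^2" using a0sq p by (simp add: power_mult_distrib mult_left_mono)
    thus ?thesis using hi unfolding a0'_def by (simp add: algebra_simps)
  qed
  have n1: "0 \<le> p^2 * a^2" by simp
  have n2: "0 \<le> 8*p * a^2" using p by simp
  have E1: "(p/6 + 8*p + p^2) * a^2 = (p/6 + 8*p) * a^2 + p^2 * a^2" by (simp add: algebra_simps)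
  have E2: "(p/6 + 8*p + p^2) * a^2 = (p/6 + p^2) * a^2 + 8*p * a^2" by (simp add: algebra_simps)
  have X: "\<bar>cos (pi*t) powr p - (1 - p*a)\<bar> \<le> (p/6 + 8*p + p^2) * a^2"
    unfolding abs_le_iff using lo2 hi2 n1 n2 E1 E2 by (intro conjI; linarith)
  have e1: "1 - p*a = 1 - p*pi^2/2 * t^2" unfolding a_def by simp
  have e2: "(p/6 + 8*p + p^2) * a^2 = (p/6 + 8*p + p^2) * pi^4/4 * t^4" unfolding asq by simp
  show ?thesis using X unfolding e1 e2 .
qed

lemma key_alg:
  fixes C S A P c2 K1 K2 u :: real
  assumes C: "\<bar>C - (1 - c2*u)\<bar> \<le> K1*u^2" and S1: "0 \<le> S - 2*A - P*u" and S2: "S - 2*A - P*u \<le> K2*u^2"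
    and u0: "0 \<le> u" and u1: "u \<le> 1" and c2: "c2 \<ge> 0" and P: "P \<ge> 0" and K1: "K1 \<ge> 0" and K2: "K2 \<ge> 0" and A: "A \<ge> 0"
  shows "\<bar>C*S - 2*A - (P - 2*A*c2)*u\<bar> \<le> (K2 + c2*P + c2*K2 + K1*(2*A + P + K2)) * u^2"
proof -
  define r where "r = C - (1 - c2*u)"
  define s where "s = S - 2*A - P*u"
  have id: "C*S - 2*A - (P - 2*A*c2)*u = s - c2*P*u^2 - c2*u * s + r*S"
    unfolding r_def s_def by (simp add: algebra_simps power2_eq_square)
  have u2: "u^2 \<le> 1" using u0 u1 by (simp add: power_le_one)
  have Sb: "0 \<le> S" "S \<le> 2*A + P + K2"
  proof -
    have "P*u \<le> P" using mult_left_mono[OF u1 P] by simp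
    moreover have "K2*u^2 \<le> K2" using mult_left_mono[OF u2 K2] by simp
    moreover have "0 \<le> P*u" using P u0 by simp
    ultimately show "0 \<le> S" "S \<le> 2*A + P + K2" using S1 S2 A by linarith+
  qed
  have b1: "\<bar>s\<bar> \<le> K2*u^2" using S1 S2 unfolding s_def by simp
  have b2: "\<bar>c2*P*u^2\<bar> = c2*P*u^2" using c2 P by simp
  have b3: "\<bar>c2*u * s\<bar> \<le> c2*K2*u^2"
  proof -
    have "\<bar>c2*u * s\<bar> = c2*u * s" using c2 u0 S1 unfolding s_def by simp
    also have "\<dots> \<le> c2*1 * s" using c2 u1 S1 unfolding s_def by (intro mult_right_mono mult_left_mono) auto
    also have "\<dots> \<le> c2*(K2*u^2)" using mult_left_mono[OF S2 c2] unfolding s_def by simp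
    finally show ?thesis by simp
  qed
  have b4: "\<bar>r*S\<bar> \<le> K1*(2*A + P + K2)*u^2"
  proof -
    have "\<bar>r*S\<bar> = \<bar>r\<bar> * S" using Sb by (simp add: abs_mult)
    also have "\<dots> \<le> (K1*u^2) * (2*A + P + K2)" using C Sb unfolding r_def
      by (intro mult_mono) auto
    finally show ?thesis by (simp add: algebra_simps)
  qed
  have "\<bar>s - c2*P*u^2 - c2*u * s + r*S\<bar> \<le> \<bar>s\<bar> + \<bar>c2*P*u^2\<bar> + \<bar>c2*u * s\<bar> + \<bar>r*S\<bar>" by linarith
  also have "\<dots> \<le> K2*u^2 + c2*P*u^2 + c2*K2*u^2 + K1*(2*A + P + K2)*u^2" using b1 b2 b3 b4 by linarith
  also have "\<dots> = (K2 + c2*P + c2*K2 + K1*(2*A + P + K2)) * u^2" by (simp add: algebra_simps)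
  finally show ?thesis unfolding id .
qed

lemma sign_lemma:
  fixes X D K u :: real
  assumes X: "\<bar>X - D*u\<bar> \<le> K*u^2" and K: "K \<ge> 0" and u: "0 < u" and ud: "u < \<bar>D\<bar> / (K+1)"
  shows "(D > 0 \<longrightarrow> X > 0) \<and> (D < 0 \<longrightarrow> X < 0)"
proof -
  have "K*u < \<bar>D\<bar>"
  proof -
    have "K*u \<le> K * (\<bar>D\<bar> / (K+1))" using ud K by (intro mult_left_mono) auto
    also have "\<dots> < \<bar>D\<bar>"
    proof (cases "D = 0")
      case False
      hence "\<bar>D\<bar> > 0" by simp
      thus ?thesis using K by (simp add: field_simps)
    next
      case True thus ?thesis using ud u by simp
    qed
    finally show ?thesis .
  qed
  hence "K*u^2 < \<bar>D\<bar>*u" using u by (simp add: power2_eq_square mult.assoc[symmetric] mult_strict_right_mono)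
  hence "\<bar>X - D*u\<bar> < \<bar>D\<bar>*u" using X by linarith
  hence h: "X > D*u - \<bar>D\<bar>*u" "X < D*u + \<bar>D\<bar>*u" by (auto simp: abs_less_iff)
  show ?thesis
  proof (intro conjI impI)
    assume "D > 0" thus "X > 0" using h(1) by simp
  next
    assume "D < 0" thus "X < 0" using h(2) by simp
  qed
qed

lemma summ_pm:
  assumes N: "N \<ge> 1" and p: "p > 1" and t: "\<bar>t\<bar> \<le> 1/2"
  shows "summable (\<lambda>j. (real N + 1/2 + real j + t) powr (-p))"
proof (rule summable_comparison_test[OF _ summ_shift[of "real N" p]])
  show "\<exists>M. \<forall>n\<ge>M. norm ((real N + 1/2 + real n + t) powr (-p)) \<le> (real N + real n) powr (-p)"
    using t p N by (intro exI[of _ 0] allI impI) (auto intro!: powr_mono2')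
qed (use N p in auto)

lemma S_bounds:
  assumes N: "N \<ge> 1" and p: "p > 1" and t: "\<bar>t\<bar> \<le> 1/2"
  defines "S \<equiv> (\<Sum>j. (real N + 1/2 + real j - t) powr (-p)) + (\<Sum>j. (real N + 1/2 + real j + t) powr (-p))"
  defines "M0 \<equiv> (\<Sum>j. (real N + real j) powr (-p))"
  shows "2 * Lam N p + p*(p+1) * Lam N (p+2) * t^2 \<le> S"
    and "S \<le> 2 * Lam N p + p*(p+1) * Lam N (p+2) * t^2 + p*(p+1)*(p+2)*(p+3)/12 * M0 * t^4"
proof -
  define u where "u j = real N + 1/2 + real j" for j
  have u32: "u j \<ge> 3/2" for j unfolding u_def using N by simp
  have sa: "summable (\<lambda>j. (u j - t) powr (-p))"
    using summ_pm[OF N p, of "-t"] t unfolding u_def by simp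
  have sb: "summable (\<lambda>j. (u j + t) powr (-p))"
    using summ_pm[OF N p, of t] t unfolding u_def by simp
  have Ss: "(\<lambda>j. (u j - t) powr (-p) + (u j + t) powr (-p)) sums S"
    unfolding S_def u_def[symmetric] by (intro sums_add summable_sums sa sb)
  have LA: "(\<lambda>j. u j powr (-p)) sums Lam N p" using Lam_sums[OF N p] unfolding u_def .
  have LB: "(\<lambda>j. u j powr (-p-2)) sums Lam N (p+2)" using Lam_sums[OF N, of "p+2"] p unfolding u_def by simp
  have M0s: "(\<lambda>j. (u j - 1/2) powr (-p)) sums M0"
  proof -
    have "summable (\<lambda>j. (real N + real j) powr (-p))" using summ_shift[of "real N" p] N p by simp
    hence "(\<lambda>j. (real N + real j) powr (-p)) sums M0" unfolding M0_def by (rule summable_sums)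
    thus ?thesis unfolding u_def by simp
  qed
  have L1: "(\<lambda>j. 2 * u j powr (-p) + p*(p+1) * u j powr (-p-2) * t^2) sums (2 * Lam N p + p*(p+1) * Lam N (p+2) * t^2)"
    by (intro sums_add sums_mult sums_mult2 LA LB)
  have L2: "(\<lambda>j. 2 * u j powr (-p) + p*(p+1) * u j powr (-p-2) * t^2 + p*(p+1)*(p+2)*(p+3) / 12 * (u j - 1/2) powr (-p) * t^4)
     sums (2 * Lam N p + p*(p+1) * Lam N (p+2) * t^2 + p*(p+1)*(p+2)*(p+3)/12 * M0 * t^4)"
    by (intro sums_add sums_mult sums_mult2 LA LB M0s)
  show "2 * Lam N p + p*(p+1) * Lam N (p+2) * t^2 \<le> S"
    by (rule sums_le[OF _ L1 Ss]) (rule pair_bounds(1)[OF u32 t p])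
  show "S \<le> 2 * Lam N p + p*(p+1) * Lam N (p+2) * t^2 + p*(p+1)*(p+2)*(p+3)/12 * M0 * t^4"
    by (rule sums_le[OF _ Ss L2]) (rule pair_bounds(2)[OF u32 t p])
qed

lemma local_behaviour:
  assumes N: "N \<ge> 1" and p: "p > 1"
  shows "\<exists>d>0. \<forall>t. 0 < \<bar>t\<bar> \<and> \<bar>t\<bar> < d \<longrightarrow>
           (G N p > 0 \<longrightarrow> hfun p N (1/2) < hfun p N (1/2 + t)) \<and>
           (G N p < 0 \<longrightarrow> hfun p N (1/2 + t) < hfun p N (1/2))"
proof (cases "G N p = 0")
  case True thus ?thesis by (intro exI[of _ 1]) auto
next
  case Gnz: False
  define A where "A = Lam N p"
  define B where "B = Lam N (p+2)"
  define M0 where "M0 = (\<Sum>j. (real N + real j) powr (-p))"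
  define K2 where "K2 = p*(p+1)*(p+2)*(p+3)/12 * M0"
  define c2 where "c2 = p*pi^2/2"
  define K1 where "K1 = (p/6 + 8*p + p^2) * pi^4/4"
  define P where "P = p*(p+1)*B"
  define K where "K = K2 + c2*P + c2*K2 + K1*(2*A + P + K2)"
  define D where "D = P - 2*A*c2"
  have A0: "A \<ge> 0" unfolding A_def using Lam_pos[OF N p] by simp
  have B0: "B \<ge> 0" unfolding B_def using Lam_pos[OF N, of "p+2"] p by simp
  have M00: "M0 \<ge> 0" unfolding M0_def
    using summ_shift[of "real N" p] N p by (intro suminf_nonneg) auto
  have K20: "K2 \<ge> 0" unfolding K2_def using p M00 by simp
  have c20: "c2 \<ge> 0" unfolding c2_def using p by simp
  have K10: "K1 \<ge> 0" unfolding K1_def using p by simp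
  have P0: "P \<ge> 0" unfolding P_def using p B0 by simp
  have K0: "K \<ge> 0" unfolding K_def using K20 c20 K10 P0 A0 by simp
  have DG: "D = p * G N p" unfolding D_def P_def c2_def G_def A_def B_def by (simp add: algebra_simps)
  have Dnz: "D \<noteq> 0" using DG Gnz p by simp
  define d where "d = min (1/5) (\<bar>D\<bar> / (K+1))"
  have d0: "d > 0" unfolding d_def using Dnz K0 by simp
  have h0: "hfun p N (1/2) = pi powr (-p) * (2*A)"
    using hfun_repr[OF N p, of 0] unfolding A_def Lam_def by simp
  show ?thesis
  proof (intro exI[of _ d] conjI allI impI d0)
    fix t :: real assume tt: "0 < \<bar>t\<bar> \<and> \<bar>t\<bar> < d"
    have t5: "\<bar>t\<bar> \<le> 1/5" using tt unfolding d_def by simp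
    have t2: "\<bar>t\<bar> < 1/2" "\<bar>t\<bar> \<le> 1/2" using t5 by simp_all
    define S where "S = (\<Sum>j. (real N + 1/2 + real j - t) powr (-p)) + (\<Sum>j. (real N + 1/2 + real j + t) powr (-p))"
    define C where "C = cos (pi*t) powr p"
    have ht: "hfun p N (1/2 + t) = pi powr (-p) * (C * S)"
      using hfun_repr[OF N p t2(1)] unfolding C_def S_def by simp
    have Sb: "2 * A + P * t^2 \<le> S" "S \<le> 2 * A + P * t^2 + K2 * t^4"
      using S_bounds[OF N p t2(2)] unfolding S_def A_def B_def P_def K2_def M0_def by (simp_all add: algebra_simps)
    have u0: "0 \<le> t^2" by simp
    have "\<bar>t\<bar>^2 \<le> 1" by (rule power_le_one) (use t5 in auto)
    hence u1: "t^2 \<le> 1" by simp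
    have t4: "t^4 = (t^2)^2" by (simp only: power_mult[symmetric]) simp
    have Cb: "\<bar>C - (1 - c2 * t^2)\<bar> \<le> K1 * (t^2)^2"
      using cosp_bounds[OF p t5] unfolding C_def c2_def K1_def t4[symmetric] .
    have Sb1: "0 \<le> S - 2*A - P*t^2" using Sb(1) by linarith
    have Sb2: "S - 2*A - P*t^2 \<le> K2*(t^2)^2" using Sb(2) unfolding t4 by linarith
    have X: "\<bar>C*S - 2*A - D*t^2\<bar> \<le> K*(t^2)^2"
      unfolding D_def K_def
      by (rule key_alg[OF Cb Sb1 Sb2 u0 u1 c20 P0 K10 K20 A0])
    have tsq: "t^2 \<le> \<bar>t\<bar>"
    proof -
      have "\<bar>t\<bar> * \<bar>t\<bar> \<le> 1 * \<bar>t\<bar>" using t5 by (intro mult_right_mono) auto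
      thus ?thesis by (simp add: power2_eq_square abs_mult[symmetric])
    qed
    have "t^2 < \<bar>D\<bar> / (K+1)" using tsq tt unfolding d_def by simp
    moreover have "0 < t^2" using tt by simp
    ultimately have sg: "(D > 0 \<longrightarrow> C*S - 2*A > 0) \<and> (D < 0 \<longrightarrow> C*S - 2*A < 0)"
      using sign_lemma[OF _ K0, of "C*S - 2*A" D "t^2"] X by simp
    have pp: "pi powr (-p) > 0" by simp
    have diff: "hfun p N (1/2 + t) - hfun p N (1/2) = pi powr (-p) * (C*S - 2*A)"
      unfolding ht h0 by (simp add: algebra_simps)
    show "G N p > 0 \<Longrightarrow> hfun p N (1/2) < hfun p N (1/2 + t)"
    proof -
      assume "G N p > 0"
      hence "D > 0" using DG p by simp
      hence "C*S - 2*A > 0" using sg by simp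
      hence "pi powr (-p) * (C*S - 2*A) > 0" using pp by simp
      thus ?thesis using diff by simp
    qed
    show "G N p < 0 \<Longrightarrow> hfun p N (1/2 + t) < hfun p N (1/2)"
    proof -
      assume "G N p < 0"
      hence "D < 0" using DG p by (simp add: mult_pos_neg)
      hence "C*S - 2*A < 0" using sg by simp
      hence "pi powr (-p) * (C*S - 2*A) < 0" using pp by (simp add: mult_pos_neg)
      thus ?thesis using diff by simp
    qed
  qed
qed

theorem theorem3:
  fixes N :: nat
  assumes "N \<ge> 1"
  shows "\<exists>ps::real.
     (\<forall>p>1. p > ps \<longrightarrow> local_min_point (hfun p N) (1/2)) \<and>
     (\<forall>p>1. p < ps \<longrightarrow> local_max_point (hfun p N) (1/2)) \<and>
     4 * (ps + 1) * incLambda (ps + 2) (real N) - pi\<^sup>2 * incLambda ps (real N) = 0 \<and>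
     ps \<ge> (1/8) * (pi\<^sup>2 * (2 * real N + 1)\<^sup>2 - 12
                    + sqrt ((pi\<^sup>2 * (2 * real N + 1)\<^sup>2 - 12)\<^sup>2 - 128)) \<and>
     ps \<le> (1/4) * sqrt (72 * pi\<^sup>2 * (real N + 1)\<^sup>2 * (2 * pi\<^sup>2 * (real N + 1)\<^sup>2 - 2 - pi\<^sup>2)
                        + 4 + 36 * pi\<^sup>2 + 9 * pi ^ 4)
           + 3 * pi\<^sup>2 * (real N + 1)\<^sup>2 - (3/4) * (2 + pi\<^sup>2)"
proof -
  have N: "N \<ge> 1" by fact
  define X where "X = pi\<^sup>2 * (2 * real N + 1)\<^sup>2 - 12"
  define L where "L = (1/8) * (X + sqrt (X\<^sup>2 - 128))"
  define p' where "p' = 2 * pi^2 * (real N + 1/2)^2 - 1"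
  define Y where "Y = 72 * pi\<^sup>2 * (real N + 1)\<^sup>2 * (2 * pi\<^sup>2 * (real N + 1)\<^sup>2 - 2 - pi\<^sup>2)
                        + 4 + 36 * pi\<^sup>2 + 9 * pi ^ 4"
  define U where "U = (1/4) * sqrt Y + 3 * pi\<^sup>2 * (real N + 1)\<^sup>2 - (3/4) * (2 + pi\<^sup>2)"
  have pi2: "pi^2 \<ge> 9" using power_mono[of 3 pi 2] pi_gt3 by simp
  have q: "(2 * real N + 1)^2 \<ge> 9" using power_mono[of 3 "2 * real N + 1" 2] N by simp
  have "pi^2 * (2 * real N + 1)^2 \<ge> 9 * 9" using mult_mono[OF pi2 q] by simp
  hence X69: "X \<ge> 69" unfolding X_def by simp
  have X2: "X\<^sup>2 - 128 \<ge> 0"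
  proof -
    have "X\<^sup>2 \<ge> 69^2" using power_mono[OF X69, of 2] by simp
    thus ?thesis by simp
  qed
  have sq0: "sqrt (X\<^sup>2 - 128) \<ge> 0" using X2 by simp
  have sqX: "sqrt (X\<^sup>2 - 128) \<le> X"
  proof -
    have "sqrt (X\<^sup>2 - 128) \<le> sqrt (X\<^sup>2)" by (rule real_sqrt_le_mono) simp
    also have "\<dots> = X" using X69 by simp
    finally show ?thesis .
  qed
  have Lalt: "L = X/8 + sqrt (X\<^sup>2 - 128)/8" unfolding L_def by simp
  have L1: "L > 1" unfolding Lalt using X69 sq0 by linarith
  have LX: "L \<le> X/4" unfolding Lalt using sqX by linarith
  have u0e: "pi^2 * (real N + 1/2)^2 = (X + 12)/4" unfolding X_def by (simp add: power2_eq_square algebra_simps)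
  have GL: "G N L < 0" by (rule G_neg[OF N L1]) (use LX u0e in simp)
  have Gp': "G N p' \<ge> 0" unfolding p'_def by (rule G_nonneg[OF N])
  have Lp': "L \<le> p'" unfolding p'_def using LX u0e X69 by simp
  have cont: "continuous_on {L..p'} (G N)"
    by (rule continuous_on_subset[OF G_cont[OF N L1]]) auto
  obtain ps where ps: "L \<le> ps" "ps \<le> p'" "G N ps = 0"
    using IVT'[of "G N" L 0 p', OF _ Gp' Lp' cont] GL by auto
  have ps1: "ps > 1" using ps L1 by simp
  have M2: "(real N + 1)^2 \<ge> 4" using power_mono[of 2 "real N + 1" 2] N by simp
  have piM: "pi^2 * (real N + 1)^2 \<ge> pi^2 * 4" using mult_left_mono[OF M2, of "pi^2"] by simp
  have Y0: "Y \<ge> 0"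
  proof -
    have "72 * pi\<^sup>2 * (real N + 1)\<^sup>2 \<ge> 0" by simp
    moreover have "2 * pi\<^sup>2 * (real N + 1)\<^sup>2 - 2 - pi\<^sup>2 \<ge> 0" using piM pi2 by linarith
    ultimately have "72 * pi\<^sup>2 * (real N + 1)\<^sup>2 * (2 * pi\<^sup>2 * (real N + 1)\<^sup>2 - 2 - pi\<^sup>2) \<ge> 0"
      by (rule mult_nonneg_nonneg)
    moreover have "pi ^ 4 \<ge> 0" by simp
    ultimately show ?thesis unfolding Y_def by simp
  qed
  have p'U: "p' \<le> U"
  proof -
    have "(real N + 1/2)^2 \<le> (real N + 1)^2" by (rule power_mono) auto
    hence "pi^2 * (real N + 1/2)^2 \<le> pi^2 * (real N + 1)^2" by (rule mult_left_mono) simp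
    moreover have "sqrt Y \<ge> 0" using Y0 by simp
    moreover have "2 * pi^2 * (real N + 1/2)^2 = 2 * (pi^2 * (real N + 1/2)^2)" by simp
    moreover have "3 * pi\<^sup>2 * (real N + 1)\<^sup>2 = 3 * (pi^2 * (real N + 1)^2)" by simp
    moreover have "pi^2 * 4 = 4 * pi^2" by simp
    moreover have "3/4 * (2 + pi\<^sup>2) = 3/2 + 3/4 * pi^2" by simp
    moreover have "1/4 * sqrt Y \<ge> 0" using Y0 by simp
    ultimately show ?thesis unfolding p'_def U_def using piM pi2 by linarith
  qed
  have lmin: "local_min_point (hfun p N) (1/2)" if p: "p > 1" "p > ps" for p
  proof -
    have Gp: "G N p > 0" using G_sign[OF N ps1 ps(3) p(1)] p by simp
    obtain d where d: "d > 0" and H: "\<forall>t. 0 < \<bar>t\<bar> \<and> \<bar>t\<bar> < d \<longrightarrow>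
           (G N p > 0 \<longrightarrow> hfun p N (1/2) < hfun p N (1/2 + t)) \<and>
           (G N p < 0 \<longrightarrow> hfun p N (1/2 + t) < hfun p N (1/2))"
      using local_behaviour[OF N p(1)] by blast
    show ?thesis unfolding local_min_point_def eventually_at
    proof (intro exI[of _ d] conjI ballI impI d)
      fix y :: real assume y: "y \<noteq> 1/2 \<and> dist y (1/2) < d"
      have "0 < \<bar>y - 1/2\<bar> \<and> \<bar>y - 1/2\<bar> < d" using y by (simp add: dist_real_def)
      hence "hfun p N (1/2) < hfun p N (1/2 + (y - 1/2))" using H Gp by blast
      thus "hfun p N (1/2) \<le> hfun p N y" by simp
    qed
  qed
  have lmax: "local_max_point (hfun p N) (1/2)" if p: "p > 1" "p < ps" for p
  proof -
    have Gp: "G N p < 0" using G_sign[OF N ps1 ps(3) p(1)] p by simp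
    obtain d where d: "d > 0" and H: "\<forall>t. 0 < \<bar>t\<bar> \<and> \<bar>t\<bar> < d \<longrightarrow>
           (G N p > 0 \<longrightarrow> hfun p N (1/2) < hfun p N (1/2 + t)) \<and>
           (G N p < 0 \<longrightarrow> hfun p N (1/2 + t) < hfun p N (1/2))"
      using local_behaviour[OF N p(1)] by blast
    show ?thesis unfolding local_max_point_def eventually_at
    proof (intro exI[of _ d] conjI ballI impI d)
      fix y :: real assume y: "y \<noteq> 1/2 \<and> dist y (1/2) < d"
      have "0 < \<bar>y - 1/2\<bar> \<and> \<bar>y - 1/2\<bar> < d" using y by (simp add: dist_real_def)
      hence "hfun p N (1/2 + (y - 1/2)) < hfun p N (1/2)" using H Gp by blast
      thus "hfun p N y \<le> hfun p N (1/2)" by simp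
    qed
  qed
  have eq: "4 * (ps + 1) * incLambda (ps + 2) (real N) - pi\<^sup>2 * incLambda ps (real N) = 0"
  proof -
    have e2: "2 powr (-(ps+2)) = 2 powr (-ps) / 4" using pw2[of 2 ps] by simp
    have i1: "incLambda ps (real N) = 2 powr (-ps) * Lam N ps" by (rule incLambda_eq[OF N ps1])
    have i2: "incLambda (ps+2) (real N) = 2 powr (-(ps+2)) * Lam N (ps+2)"
      by (rule incLambda_eq[OF N]) (use ps1 in simp)
    have "4 * (ps + 1) * incLambda (ps + 2) (real N) - pi\<^sup>2 * incLambda ps (real N)
          = 2 powr (-ps) * G N ps"
      unfolding i1 i2 e2 G_def by (simp add: algebra_simps)
    thus ?thesis using ps(3) by simp
  qed
  show ?thesis
  proof (intro exI[of _ ps] conjI allI impI)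
    show "4 * (ps + 1) * incLambda (ps + 2) (real N) - pi\<^sup>2 * incLambda ps (real N) = 0" by (rule eq)
    show "ps \<ge> (1/8) * (pi\<^sup>2 * (2 * real N + 1)\<^sup>2 - 12
                    + sqrt ((pi\<^sup>2 * (2 * real N + 1)\<^sup>2 - 12)\<^sup>2 - 128))"
      using ps(1) unfolding L_def X_def .
    show "ps \<le> (1/4) * sqrt (72 * pi\<^sup>2 * (real N + 1)\<^sup>2 * (2 * pi\<^sup>2 * (real N + 1)\<^sup>2 - 2 - pi\<^sup>2)
                        + 4 + 36 * pi\<^sup>2 + 9 * pi ^ 4)
           + 3 * pi\<^sup>2 * (real N + 1)\<^sup>2 - (3/4) * (2 + pi\<^sup>2)"
      using ps(2) p'U unfolding U_def Y_def by simp
  qed (use lmin lmax in auto)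
qed

end
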